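(* Let $n\ge2$, let $x\in\mathbb{C}^{n\times n}$ be generic (as defined in the context), and let $d=\operatorname{diag}(d(1),\ldots,d(n))$ be an invertible diagonal matrix. Put $\hat x=dxd^{-1}$ (which is generic with the same leading principal eigenvalues as $x$). With the same fixed orderings of the eigenvalues of the leading principal submatrices, let $b_m$ and $\hat b_m$ ($1\le m\le n-1$) be the dual coordinates of $x$ and of $\hat x$ respectively. Then \[ \hat b_m=b_m\,\frac{d(m+1)}{d(m)},\qquad 1\le m\le n-1. \]
   Context: For a square matrix $x$, $x_k$ is its leading principal $k\times k$ submatrix and $E(x_k)$ its eigenvalue multiset. A matrix $x\in\mathbb{C}^{n\times n}$ is generic if for every $1\le k\le n$ the eigenvalues of $x_k$ are distinct and for every $1\le k\le n-1$, $E(x_k)\cap E(x_{k+1})=\varnothing$. Fix, for each $k$, an ordering $\mu^{(k)}_1,\ldots,\mu^{(k)}_k$ of $E(x_k)$ and put $\Lambda_k=\operatorname{diag}(\mu^{(k)}_1,\ldots,\mu^{(k)}_k)$. For generic $x$ and $1\le m\le n-1$, let $g_m\in\mathrm{GL}(m)$ be the unique matrix with $x_m=g_m\Lambda_mg_m^{-1}$ whose last row consists of ones; the dual coordinates $b_m\in\mathbb{C}^m$ of $x$ are defined by $\begin{pmatrix} g_m^{-1}&0\\0&1\end{pmatrix} x_{m+1}\begin{pmatrix} g_m&0\\0&1\end{pmatrix}=\begin{pmatrix}\Lambda_m & c_m\\ b_m^{T} & \delta_{m+1}\end{pmatrix}$ for some $c_m\in\mathbb{C}^m$, $\delta_{m+1}\in\mathbb{C}$.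 *)

theory Defs
  imports "Jordan_Normal_Form.Matrix" "Jordan_Normal_Form.Char_Poly"
begin

text \<open>Matrices are Jordan_Normal_Form matrices, indices start at 0.
  The leading principal k x k submatrix x_k.\<close>
definition lead_sub :: "'a mat \<Rightarrow> nat \<Rightarrow> 'a mat" where
  "lead_sub x k = mat k k (\<lambda>(i,j). x $$ (i,j))"

definition mat_inv :: "'a :: semiring_1 mat \<Rightarrow> 'a mat" where
  "mat_inv A = (THE B. B \<in> carrier_mat (dim_row A) (dim_row A) \<and> inverts_mat A B \<and> inverts_mat B A)"

definition generic :: "nat \<Rightarrow> complex mat \<Rightarrow> bool" where
  "generic n x \<longleftrightarrow> x \<in> carrier_mat n n \<and>
     (\<forall>k\<in>{1..n}. card {\<mu>. eigenvalue (lead_sub x k) \<mu>} = k) \<and>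
     (\<forall>k\<in>{1..n-1}. {\<mu>. eigenvalue (lead_sub x k) \<mu>} \<inter> {\<mu>. eigenvalue (lead_sub x (k+1)) \<mu>} = {})"

definition valid_orderings :: "nat \<Rightarrow> complex mat \<Rightarrow> (nat \<Rightarrow> nat \<Rightarrow> complex) \<Rightarrow> bool" where
  "valid_orderings n x mu \<longleftrightarrow>
     (\<forall>k\<in>{1..n}. bij_betw (mu k) {..<k} {\<mu>. eigenvalue (lead_sub x k) \<mu>})"

definition Lambda :: "(nat \<Rightarrow> nat \<Rightarrow> complex) \<Rightarrow> nat \<Rightarrow> complex mat" where
  "Lambda mu k = mat_diag k (mu k)"

definition g_mat :: "complex mat \<Rightarrow> (nat \<Rightarrow> nat \<Rightarrow> complex) \<Rightarrow> nat \<Rightarrow> complex mat" where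
  "g_mat x mu m = (THE g. g \<in> carrier_mat m m \<and> invertible_mat g \<and>
      lead_sub x m = g * Lambda mu m * mat_inv g \<and> (\<forall>j<m. g $$ (m - 1, j) = 1))"

definition conj_block :: "complex mat \<Rightarrow> (nat \<Rightarrow> nat \<Rightarrow> complex) \<Rightarrow> nat \<Rightarrow> complex mat" where
  "conj_block x mu m =
     four_block_mat (mat_inv (g_mat x mu m)) (0\<^sub>m m 1) (0\<^sub>m 1 m) (1\<^sub>m 1)
     * lead_sub x (m+1)
     * four_block_mat (g_mat x mu m) (0\<^sub>m m 1) (0\<^sub>m 1 m) (1\<^sub>m 1)"

definition dual_coord :: "complex mat \<Rightarrow> (nat \<Rightarrow> nat \<Rightarrow> complex) \<Rightarrow> nat \<Rightarrow> complex vec" where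
  "dual_coord x mu m = vec m (\<lambda>j. conj_block x mu m $$ (m, j))"

end

theory Submission
  imports Defs
begin


lemma det_inv_ex:
  assumes A: "A \<in> carrier_mat n n" and d: "det A \<noteq> (0::'a::field)"
  shows "\<exists>B\<in>carrier_mat n n. A * B = 1\<^sub>m n \<and> B * A = 1\<^sub>m n"
  using det_non_zero_imp_unit[OF A d, of undefined] unfolding Units_def ring_mat_def by auto

lemma mat_inv_unique:
  assumes A: "A \<in> carrier_mat n n" and B: "B \<in> carrier_mat n n"
    and AB: "A * B = 1\<^sub>m n" and BA: "B * A = 1\<^sub>m n"
  shows "mat_inv A = B"
  unfolding mat_inv_def
proof (rule the_equality)
  show "B \<in> carrier_mat (dim_row A) (dim_row A) \<and> inverts_mat A B \<and> inverts_mat B A"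
    using A B AB BA unfolding inverts_mat_def by auto
next
  fix C assume C: "C \<in> carrier_mat (dim_row A) (dim_row A) \<and> inverts_mat A C \<and> inverts_mat C A"
  hence Cc: "C \<in> carrier_mat n n" and AC: "A * C = 1\<^sub>m n" and CA: "C * A = 1\<^sub>m n"
    using A unfolding inverts_mat_def by auto
  have "C = C * (A * B)" using Cc AB by simp
  also have "\<dots> = (C * A) * B" using A B Cc by (simp add: assoc_mult_mat)
  also have "\<dots> = B" using CA B by simp
  finally show "C = B" .
qed

lemma mat_inv_props:
  assumes A: "A \<in> carrier_mat n n" and d: "det A \<noteq> (0::'a::field)"
  shows "mat_inv A \<in> carrier_mat n n \<and> A * mat_inv A = 1\<^sub>m n \<and> mat_inv A * A = 1\<^sub>m n"
proof -
  obtain B where B: "B \<in> carrier_mat n n" "A * B = 1\<^sub>m n" "B * A = 1\<^sub>m n"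
    using det_inv_ex[OF A d] by blast
  have "mat_inv A = B" using mat_inv_unique[OF A B] .
  thus ?thesis using B by simp
qed

lemma invertible_iff_det:
  assumes A: "A \<in> carrier_mat n n"
  shows "invertible_mat A \<longleftrightarrow> det A \<noteq> (0::'a::field)"
proof
  assume "invertible_mat A"
  then obtain B where AB: "A * B = 1\<^sub>m n" and BA: "B * A = 1\<^sub>m (dim_row B)"
    using A unfolding invertible_mat_def inverts_mat_def by auto
  have "dim_col B = n" using arg_cong[OF AB, of dim_col] by simp
  moreover have "dim_row B = n" using arg_cong[OF BA, of dim_col] A by simp
  ultimately have Bc: "B \<in> carrier_mat n n" by auto
  have "det A * det B = 1" using arg_cong[OF AB, of det] det_mult[OF A Bc] by simp
  thus "det A \<noteq> 0" by auto
next
  assume "det A \<noteq> 0"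
  then obtain B where "B \<in> carrier_mat n n" "A * B = 1\<^sub>m n" "B * A = 1\<^sub>m n"
    using det_inv_ex[OF A] by blast
  thus "invertible_mat A" using A unfolding invertible_mat_def inverts_mat_def square_mat.simps
    by auto
qed



lemma indep_aux:
  fixes A :: "nat \<Rightarrow> nat \<Rightarrow> complex" and g :: "nat \<Rightarrow> nat \<Rightarrow> complex"
  assumes eig: "\<forall>i<m. \<forall>j<m. (\<Sum>l<m. A i l * g l j) = g i j * \<mu> j"
    and ker: "\<forall>i<m. (\<Sum>j<m. g i j * c j) = 0"
    and J: "finite J"
  shows "\<forall>i<m. (\<Sum>j<m. g i j * (c j * (\<Prod>l\<in>J. \<mu> j - \<mu> l))) = 0"
  using J
proof (induction J rule: finite_induct)
  case empty thus ?case using ker by simp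
next
  case (insert a J)
  let ?p = "\<lambda>j. c j * (\<Prod>l\<in>J. \<mu> j - \<mu> l)"
  show ?case
  proof (intro allI impI)
    fix i assume i: "i < m"
    have "(\<Sum>j<m. g i j * (c j * (\<Prod>l\<in>insert a J. \<mu> j - \<mu> l)))
        = (\<Sum>j<m. (g i j * \<mu> j) * ?p j) - \<mu> a * (\<Sum>j<m. g i j * ?p j)"
    proof -
      have "\<And>j. g i j * (c j * (\<Prod>l\<in>insert a J. \<mu> j - \<mu> l)) = (g i j * \<mu> j) * ?p j - \<mu> a * (g i j * ?p j)"
        using insert(1,2) by (simp add: algebra_simps)
      thus ?thesis by (simp add: sum_subtractf sum_distrib_left)
    qed
    also have "(\<Sum>j<m. (g i j * \<mu> j) * ?p j) = (\<Sum>j<m. (\<Sum>l<m. A i l * g l j) * ?p j)"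
      using eig i by simp
    also have "\<dots> = (\<Sum>l<m. A i l * (\<Sum>j<m. g l j * ?p j))"
    proof -
      have "(\<Sum>j<m. (\<Sum>l<m. A i l * g l j) * ?p j) = (\<Sum>j<m. \<Sum>l<m. A i l * (g l j * ?p j))"
        by (simp add: sum_distrib_right mult.assoc)
      also have "\<dots> = (\<Sum>l<m. \<Sum>j<m. A i l * (g l j * ?p j))" by (rule sum.swap)
      also have "\<dots> = (\<Sum>l<m. A i l * (\<Sum>j<m. g l j * ?p j))" by (simp add: sum_distrib_left)
      finally show ?thesis .
    qed
    also have "\<dots> = 0" using insert(3) by simp
    finally show "(\<Sum>j<m. g i j * (c j * (\<Prod>l\<in>insert a J. \<mu> j - \<mu> l))) = 0"
      using insert(3) i by simp
  qed
qed

lemma indep: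
  fixes A :: "nat \<Rightarrow> nat \<Rightarrow> complex" and g :: "nat \<Rightarrow> nat \<Rightarrow> complex"
  assumes eig: "\<forall>i<m. \<forall>j<m. (\<Sum>l<m. A i l * g l j) = g i j * \<mu> j"
    and ker: "\<forall>i<m. (\<Sum>j<m. g i j * c j) = 0"
    and inj: "inj_on \<mu> {..<m}"
    and nz: "\<forall>j<m. \<exists>i<m. g i j \<noteq> 0"
    and j0: "j0 < m"
  shows "c j0 = 0"
proof -
  let ?J = "{..<m} - {j0}"
  have H: "\<forall>i<m. (\<Sum>j<m. g i j * (c j * (\<Prod>l\<in>?J. \<mu> j - \<mu> l))) = 0"
    using indep_aux[OF eig ker] by simp
  have z: "\<And>j. j < m \<Longrightarrow> j \<noteq> j0 \<Longrightarrow> (\<Prod>l\<in>?J. \<mu> j - \<mu> l) = 0"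
    by (rule prod_zero) auto
  have P: "(\<Prod>l\<in>?J. \<mu> j0 - \<mu> l) \<noteq> 0"
    using inj j0 by (auto simp: inj_on_def)
  obtain i where i: "i < m" "g i j0 \<noteq> 0" using nz j0 by blast
  have "(\<Sum>j<m. g i j * (c j * (\<Prod>l\<in>?J. \<mu> j - \<mu> l))) = g i j0 * (c j0 * (\<Prod>l\<in>?J. \<mu> j0 - \<mu> l))"
  proof -
    have "(\<Sum>j<m. g i j * (c j * (\<Prod>l\<in>?J. \<mu> j - \<mu> l))) = g i j0 * (c j0 * (\<Prod>l\<in>?J. \<mu> j0 - \<mu> l))
       + (\<Sum>j\<in>{..<m} - {j0}. g i j * (c j * (\<Prod>l\<in>?J. \<mu> j - \<mu> l)))"
      by (rule sum.remove) (use j0 in auto)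
    also have "(\<Sum>j\<in>{..<m} - {j0}. g i j * (c j * (\<Prod>l\<in>?J. \<mu> j - \<mu> l))) = 0"
      by (rule sum.neutral) (use z in auto)
    finally show ?thesis by simp
  qed
  with H i have "g i j0 * (c j0 * (\<Prod>l\<in>?J. \<mu> j0 - \<mu> l)) = 0" by auto
  thus ?thesis using i P by simp
qed

lemma det_nz_crit:
  fixes g :: "complex mat"
  assumes gc: "g \<in> carrier_mat m m"
    and eig: "\<forall>i<m. \<forall>j<m. (\<Sum>l<m. A i l * g $$ (l, j)) = g $$ (i, j) * \<mu> j"
    and inj: "inj_on \<mu> {..<m}"
    and nz: "\<forall>j<m. \<exists>i<m. g $$ (i, j) \<noteq> 0"
  shows "det g \<noteq> 0"
proof
  assume "det g = 0"
  then obtain v where v: "v \<in> carrier_vec m" "v \<noteq> 0\<^sub>v m" "g *\<^sub>v v = 0\<^sub>v m"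
    using det_0_iff_vec_prod_zero[OF gc] by auto
  have ker: "\<forall>i<m. (\<Sum>j<m. g $$ (i, j) * v $ j) = 0"
  proof (intro allI impI)
    fix i assume i: "i < m"
    have "(g *\<^sub>v v) $ i = 0" using v(3) i by simp
    thus "(\<Sum>j<m. g $$ (i, j) * v $ j) = 0" using i gc v(1)
      by (simp add: scalar_prod_def lessThan_atLeast0)
  qed
  have "\<forall>j<m. v $ j = 0"
    using indep[of m A "\<lambda>i j. g $$ (i,j)" \<mu> "\<lambda>j. v $ j", OF eig ker inj nz] by blast
  hence "v = 0\<^sub>v m" using v(1) by (intro eq_vecI) auto
  with v(2) show False by simp
qed



definition QQ :: "(nat \<Rightarrow> nat \<Rightarrow> complex) \<Rightarrow> (nat \<Rightarrow> nat \<Rightarrow> complex) \<Rightarrow> nat \<Rightarrow> complex mat \<Rightarrow> bool" where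
  "QQ X mu m g \<longleftrightarrow> g \<in> carrier_mat m m \<and> det g \<noteq> 0 \<and>
     (\<forall>i<m. \<forall>j<m. (\<Sum>l<m. X i l * g $$ (l, j)) = g $$ (i, j) * mu m j) \<and> (\<forall>j<m. g $$ (m - 1, j) = 1)"

lemma lead_sub_carrier[simp]: "lead_sub x m \<in> carrier_mat m m"
  unfolding lead_sub_def by auto

lemma lead_sub_dim[simp]: "dim_row (lead_sub x m) = m" "dim_col (lead_sub x m) = m"
  unfolding lead_sub_def by auto

lemma lead_sub_index[simp]: "i < m \<Longrightarrow> j < m \<Longrightarrow> lead_sub x m $$ (i,j) = x $$ (i,j)"
  unfolding lead_sub_def by auto

lemma Lambda_carrier[simp]: "Lambda mu m \<in> carrier_mat m m"
  unfolding Lambda_def by auto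

lemma eig_eq_iff:
  assumes gc: "g \<in> carrier_mat m m"
  shows "lead_sub x m * g = g * Lambda mu m \<longleftrightarrow>
    (\<forall>i<m. \<forall>j<m. (\<Sum>l<m. x $$ (i, l) * g $$ (l, j)) = g $$ (i, j) * mu m j)"
proof -
  have R: "g * Lambda mu m = mat m m (\<lambda>(i,j). g $$ (i,j) * mu m j)"
    unfolding Lambda_def by (rule mat_diag_mult_right[OF gc])
  have L: "\<And>i j. i < m \<Longrightarrow> j < m \<Longrightarrow> (lead_sub x m * g) $$ (i,j) = (\<Sum>l<m. x $$ (i, l) * g $$ (l, j))"
  proof -
    fix i j assume ij: "i < m" "j < m"
    have "(lead_sub x m * g) $$ (i,j) = (\<Sum>l\<in>{0..<m}. lead_sub x m $$ (i,l) * g $$ (l,j))"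
      using gc ij by (simp add: scalar_prod_def)
    also have "\<dots> = (\<Sum>l<m. x $$ (i, l) * g $$ (l, j))"
      using ij by (auto simp: lessThan_atLeast0 intro!: sum.cong)
    finally show "(lead_sub x m * g) $$ (i,j) = (\<Sum>l<m. x $$ (i, l) * g $$ (l, j))" .
  qed
  show ?thesis
  proof
    assume H: "lead_sub x m * g = g * Lambda mu m"
    show "\<forall>i<m. \<forall>j<m. (\<Sum>l<m. x $$ (i, l) * g $$ (l, j)) = g $$ (i, j) * mu m j"
    proof (intro allI impI)
      fix i j assume ij: "i < m" "j < m"
      have "(lead_sub x m * g) $$ (i,j) = (g * Lambda mu m) $$ (i,j)" using H by simp
      thus "(\<Sum>l<m. x $$ (i, l) * g $$ (l, j)) = g $$ (i, j) * mu m j" using L[OF ij] R ij by simp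
    qed
  next
    assume H: "\<forall>i<m. \<forall>j<m. (\<Sum>l<m. x $$ (i, l) * g $$ (l, j)) = g $$ (i, j) * mu m j"
    show "lead_sub x m * g = g * Lambda mu m"
      unfolding R by (rule eq_matI) (use gc H L in auto)
  qed
qed

lemma P_iff:
  "(g \<in> carrier_mat m m \<and> invertible_mat g \<and> lead_sub x m = g * Lambda mu m * mat_inv g \<and> (\<forall>j<m. g $$ (m - 1, j) = 1))
   \<longleftrightarrow> QQ (\<lambda>i l. x $$ (i,l)) mu m g"
proof
  assume H: "g \<in> carrier_mat m m \<and> invertible_mat g \<and> lead_sub x m = g * Lambda mu m * mat_inv g \<and> (\<forall>j<m. g $$ (m - 1, j) = 1)"
  hence gc: "g \<in> carrier_mat m m" and d: "det g \<noteq> 0" using invertible_iff_det by blast+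
  note I = mat_inv_props[OF gc d]
  have "lead_sub x m * g = g * Lambda mu m * mat_inv g * g" using H by simp
  also have "\<dots> = g * Lambda mu m * (mat_inv g * g)" using gc I
    by (intro assoc_mult_mat[of _ m m _ m _ m]) auto
  also have "\<dots> = g * Lambda mu m" using I gc by (metis Lambda_carrier mult_carrier_mat right_mult_one_mat)
  finally show "QQ (\<lambda>i l. x $$ (i,l)) mu m g" unfolding QQ_def using eig_eq_iff[OF gc] H d by blast
next
  assume H: "QQ (\<lambda>i l. x $$ (i,l)) mu m g"
  hence gc: "g \<in> carrier_mat m m" and d: "det g \<noteq> 0" unfolding QQ_def by auto
  note I = mat_inv_props[OF gc d]
  have E: "lead_sub x m * g = g * Lambda mu m" using H eig_eq_iff[OF gc] unfolding QQ_def by blast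
  have "lead_sub x m = lead_sub x m * (g * mat_inv g)" using I by simp
  also have "\<dots> = (lead_sub x m * g) * mat_inv g" using gc I
    by (intro assoc_mult_mat[of _ m m _ m _ m, symmetric]) auto
  also have "\<dots> = g * Lambda mu m * mat_inv g" using E by simp
  finally show "g \<in> carrier_mat m m \<and> invertible_mat g \<and> lead_sub x m = g * Lambda mu m * mat_inv g \<and> (\<forall>j<m. g $$ (m - 1, j) = 1)"
    using gc d invertible_iff_det[OF gc] H unfolding QQ_def by blast
qed

lemma g_mat_QQ: "g_mat x mu m = (THE g. QQ (\<lambda>i l. x $$ (i,l)) mu m g)"
  unfolding g_mat_def P_iff ..



lemma lead_mult_vec:
  assumes v: "v \<in> carrier_vec m" and i: "i < m"
  shows "(lead_sub x m *\<^sub>v v) $ i = (\<Sum>l<m. x $$ (i,l) * v $ l)"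
proof -
  have "(lead_sub x m *\<^sub>v v) $ i = (\<Sum>l\<in>{0..<m}. lead_sub x m $$ (i,l) * v $ l)"
    using v i by (simp add: scalar_prod_def)
  also have "\<dots> = (\<Sum>l<m. x $$ (i, l) * v $ l)"
    using i by (auto simp: lessThan_atLeast0 intro!: sum.cong)
  finally show ?thesis .
qed

lemma lastcomp:
  assumes gen: "generic n x" and m: "1 \<le> m" "m \<le> n" and v: "v \<in> carrier_vec m"
    and eq: "\<forall>i<m. (\<Sum>l<m. x $$ (i,l) * v $ l) = \<mu> * v $ i"
    and ev: "eigenvalue (lead_sub x m) \<mu>" and last: "v $ (m - 1) = 0"
  shows "\<forall>i<m. v $ i = 0"
proof (rule ccontr)
  assume "\<not> ?thesis"
  then obtain i0 where i0: "i0 < m" "v $ i0 \<noteq> 0" by auto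
  have i0': "i0 < m - 1" using i0 last by (cases "i0 = m - 1") auto
  hence m2: "m \<ge> 2" by auto
  define k where "k = m - 1"
  have mk: "m = Suc k" using m2 unfolding k_def by auto
  define w where "w = vec k (\<lambda>i. v $ i)"
  have wc: "w \<in> carrier_vec k" unfolding w_def by auto
  have "eigenvector (lead_sub x k) w \<mu>"
    unfolding eigenvector_def
  proof (intro conjI)
    show "w \<in> carrier_vec (dim_row (lead_sub x k))" using wc by simp
    show "w \<noteq> 0\<^sub>v (dim_row (lead_sub x k))"
    proof
      assume "w = 0\<^sub>v (dim_row (lead_sub x k))"
      hence "w $ i0 = 0" using i0' unfolding k_def by simp
      thus False using i0 i0' unfolding w_def k_def by simp
    qed
    show "lead_sub x k *\<^sub>v w = \<mu> \<cdot>\<^sub>v w"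
    proof (rule eq_vecI)
      fix i assume "i < dim_vec (\<mu> \<cdot>\<^sub>v w)"
      hence i: "i < k" unfolding w_def by simp
      have "(lead_sub x k *\<^sub>v w) $ i = (\<Sum>l<k. x $$ (i,l) * v $ l)"
        using lead_mult_vec[OF wc i] unfolding w_def by simp
      also have "\<dots> = (\<Sum>l<m. x $$ (i,l) * v $ l)"
      proof -
        have "(\<Sum>l<m. x $$ (i,l) * v $ l) = (\<Sum>l<k. x $$ (i,l) * v $ l) + x $$ (i,k) * v $ k"
          by (simp add: mk)
        moreover have "v $ k = 0" using last unfolding k_def .
        ultimately show ?thesis by simp
      qed
      also have "\<dots> = \<mu> * v $ i" using eq i mk by simp
      finally show "(lead_sub x k *\<^sub>v w) $ i = (\<mu> \<cdot>\<^sub>v w) $ i" using i unfolding w_def by simp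
    qed (simp add: w_def)
  qed
  hence "eigenvalue (lead_sub x k) \<mu>" unfolding eigenvalue_def by auto
  moreover have "k \<in> {1..n-1}" "k + 1 = m" using m2 m unfolding k_def by auto
  ultimately show False using gen ev unfolding generic_def by blast
qed

lemma EU:
  assumes gen: "generic n x" and vo: "valid_orderings n x mu" and m: "1 \<le> m" "m \<le> n"
  shows "\<exists>!g. QQ (\<lambda>i l. x $$ (i,l)) mu m g"
proof -
  have bij: "bij_betw (mu m) {..<m} {\<mu>. eigenvalue (lead_sub x m) \<mu>}"
    using vo m unfolding valid_orderings_def by auto
  hence inj: "inj_on (mu m) {..<m}" and evs: "\<And>j. j < m \<Longrightarrow> eigenvalue (lead_sub x m) (mu m j)"
    using bij_betw_apply[OF bij] by (auto simp: bij_betw_def)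
  define V where "V j = (SOME v. eigenvector (lead_sub x m) v (mu m j))" for j
  have EV: "eigenvector (lead_sub x m) (V j) (mu m j)" if "j < m" for j
    using evs[OF that] unfolding eigenvalue_def V_def by (rule someI_ex)
  have Vc: "V j \<in> carrier_vec m" and Vnz: "V j \<noteq> 0\<^sub>v m"
    and Veq: "\<forall>i<m. (\<Sum>l<m. x $$ (i,l) * V j $ l) = mu m j * V j $ i" if "j < m" for j
  proof -
    show Vc: "V j \<in> carrier_vec m" using EV[OF that] unfolding eigenvector_def by simp
    show "V j \<noteq> 0\<^sub>v m" using EV[OF that] unfolding eigenvector_def by simp
    show "\<forall>i<m. (\<Sum>l<m. x $$ (i,l) * V j $ l) = mu m j * V j $ i"
    proof (intro allI impI)
      fix i assume i: "i < m"
      have "(lead_sub x m *\<^sub>v V j) $ i = (mu m j \<cdot>\<^sub>v V j) $ i"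
        using EV[OF that] unfolding eigenvector_def by simp
      thus "(\<Sum>l<m. x $$ (i,l) * V j $ l) = mu m j * V j $ i"
        using lead_mult_vec[OF Vc i] Vc i by simp
    qed
  qed
  have Vlast: "V j $ (m - 1) \<noteq> 0" if j: "j < m" for j
  proof
    assume "V j $ (m - 1) = 0"
    hence "\<forall>i<m. V j $ i = 0" using lastcomp[OF gen m Vc[OF j] Veq[OF j] evs[OF j]] by blast
    hence "V j = 0\<^sub>v m" using Vc[OF j] by (intro eq_vecI) auto
    with Vnz[OF j] show False by simp
  qed
  define g where "g = mat m m (\<lambda>(i,j). V j $ i / V j $ (m - 1))"
  have gc: "g \<in> carrier_mat m m" unfolding g_def by simp
  have geig: "\<forall>i<m. \<forall>j<m. (\<Sum>l<m. x $$ (i,l) * g $$ (l, j)) = g $$ (i, j) * mu m j"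
  proof (intro allI impI)
    fix i j assume ij: "i < m" "j < m"
    have "(\<Sum>l<m. x $$ (i,l) * g $$ (l, j)) = (\<Sum>l<m. x $$ (i,l) * V j $ l / V j $ (m - 1))"
      unfolding g_def using ij by (auto intro!: sum.cong)
    also have "\<dots> = (\<Sum>l<m. x $$ (i,l) * V j $ l) / V j $ (m - 1)"
      by (simp add: sum_divide_distrib)
    also have "\<dots> = g $$ (i, j) * mu m j" using Veq[OF ij(2)] ij unfolding g_def by simp
    finally show "(\<Sum>l<m. x $$ (i,l) * g $$ (l, j)) = g $$ (i, j) * mu m j" .
  qed
  have glast: "\<forall>j<m. g $$ (m - 1, j) = 1" using Vlast m unfolding g_def by auto
  have gdet: "det g \<noteq> 0"
  proof (rule det_nz_crit[OF gc geig inj])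
    show "\<forall>j<m. \<exists>i<m. g $$ (i, j) \<noteq> 0"
    proof (intro allI impI)
      fix j assume j: "j < m"
      show "\<exists>i<m. g $$ (i, j) \<noteq> 0" using glast j m by (intro exI[of _ "m - 1"]) auto
    qed
  qed
  have Qg: "QQ (\<lambda>i l. x $$ (i,l)) mu m g" unfolding QQ_def using gc gdet geig glast by blast
  show ?thesis
  proof (rule ex1I[of _ g])
    show "QQ (\<lambda>i l. x $$ (i,l)) mu m g" by (rule Qg)
  next
    fix h assume Qh: "QQ (\<lambda>i l. x $$ (i,l)) mu m h"
    have hc: "h \<in> carrier_mat m m" using Qh unfolding QQ_def by auto
    show "h = g"
    proof (rule eq_matI)
      fix i j assume ij: "i < dim_row g" "j < dim_col g"
      hence ij: "i < m" "j < m" using gc by auto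
      define v where "v = vec m (\<lambda>i. h $$ (i,j) - g $$ (i,j))"
      have vc: "v \<in> carrier_vec m" unfolding v_def by simp
      have veq: "\<forall>i<m. (\<Sum>l<m. x $$ (i,l) * v $ l) = mu m j * v $ i"
      proof (intro allI impI)
        fix i assume i: "i < m"
        have "(\<Sum>l<m. x $$ (i,l) * v $ l) = (\<Sum>l<m. x $$ (i,l) * h $$ (l,j)) - (\<Sum>l<m. x $$ (i,l) * g $$ (l,j))"
        proof -
          have "(\<Sum>l<m. x $$ (i,l) * v $ l) = (\<Sum>l<m. x $$ (i,l) * h $$ (l,j) - x $$ (i,l) * g $$ (l,j))"
            unfolding v_def by (auto intro!: sum.cong simp: right_diff_distrib)
          thus ?thesis by (simp add: sum_subtractf)
        qed
        also have "\<dots> = h $$ (i,j) * mu m j - g $$ (i,j) * mu m j"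
        proof -
          have A: "(\<Sum>l<m. x $$ (i,l) * h $$ (l,j)) = h $$ (i,j) * mu m j" using Qh i ij unfolding QQ_def by blast
          have B: "(\<Sum>l<m. x $$ (i,l) * g $$ (l,j)) = g $$ (i,j) * mu m j" using geig i ij by blast
          show ?thesis by (simp only: A B)
        qed
        also have "\<dots> = mu m j * v $ i" using i by (simp add: v_def algebra_simps)
        finally show "(\<Sum>l<m. x $$ (i,l) * v $ l) = mu m j * v $ i" .
      qed
      have vl: "v $ (m - 1) = 0" using Qh glast ij m unfolding QQ_def v_def by simp
      have "v $ i = 0" using lastcomp[OF gen m vc veq evs[OF ij(2)] vl] ij by blast
      thus "h $$ (i,j) = g $$ (i,j)" using ij unfolding v_def by simp
    qed (use hc gc in auto)
  qed
qed



lemma mult_mat_index_sum: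
  assumes A: "A \<in> carrier_mat a b" and B: "B \<in> carrier_mat b c" and i: "i < a" and j: "j < c"
  shows "(A * B) $$ (i,j) = (\<Sum>k<b. A $$ (i,k) * B $$ (k,j))"
  using A B i j by (auto simp: scalar_prod_def lessThan_atLeast0 intro!: sum.cong)

lemma mult_vec_index_sum:
  assumes A: "A \<in> carrier_mat a b" and v: "v \<in> carrier_vec b" and i: "i < a"
  shows "(A *\<^sub>v v) $ i = (\<Sum>k<b. A $$ (i,k) * v $ k)"
  using A v i by (auto simp: scalar_prod_def lessThan_atLeast0 intro!: sum.cong)

lemma transfer:
  assumes Q: "QQ X mu m g" and XX: "\<forall>i<m. \<forall>l<m. X' i l = s i * X i l / s l"
    and s: "\<forall>i<m. s i \<noteq> 0" and m: "1 \<le> m"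
  shows "QQ X' mu m (mat m m (\<lambda>(i,j). s i * g $$ (i,j) / s (m - 1)))"
proof -
  let ?t = "s (m - 1)"
  have t: "?t \<noteq> 0" using s m by auto
  define g' where "g' = mat m m (\<lambda>(i,j). s i * g $$ (i,j) / ?t)"
  have gc: "g \<in> carrier_mat m m" and dg: "det g \<noteq> 0"
    and eig: "\<forall>i<m. \<forall>j<m. (\<Sum>l<m. X i l * g $$ (l, j)) = g $$ (i, j) * mu m j"
    and last: "\<forall>j<m. g $$ (m - 1, j) = 1" using Q unfolding QQ_def by auto
  have g'c: "g' \<in> carrier_mat m m" unfolding g'_def by simp
  have eig': "\<forall>i<m. \<forall>j<m. (\<Sum>l<m. X' i l * g' $$ (l, j)) = g' $$ (i, j) * mu m j"
  proof (intro allI impI)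
    fix i j assume i: "i < m" and j: "j < m"
    have "(\<Sum>l<m. X' i l * g' $$ (l, j)) = (\<Sum>l<m. s i / ?t * (X i l * g $$ (l, j)))"
    proof (rule sum.cong)
      fix l assume "l \<in> {..<m}"
      hence l: "l < m" by simp
      show "X' i l * g' $$ (l, j) = s i / ?t * (X i l * g $$ (l, j))"
        using XX i l j s t unfolding g'_def by (simp add: field_simps)
    qed simp
    also have "\<dots> = s i / ?t * (\<Sum>l<m. X i l * g $$ (l, j))" by (rule sum_distrib_left[symmetric])
    also have "\<dots> = s i / ?t * (g $$ (i, j) * mu m j)" using eig i j by simp
    also have "\<dots> = g' $$ (i, j) * mu m j" using i j unfolding g'_def by simp
    finally show "(\<Sum>l<m. X' i l * g' $$ (l, j)) = g' $$ (i, j) * mu m j" .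
  qed
  have last': "\<forall>j<m. g' $$ (m - 1, j) = 1" using last t m unfolding g'_def by auto
  have det': "det g' \<noteq> 0"
  proof
    assume "det g' = 0"
    then obtain v where v: "v \<in> carrier_vec m" "v \<noteq> 0\<^sub>v m" "g' *\<^sub>v v = 0\<^sub>v m"
      using det_0_iff_vec_prod_zero[OF g'c] by auto
    have "g *\<^sub>v v = 0\<^sub>v m"
    proof (rule eq_vecI)
      fix i assume "i < dim_vec (0\<^sub>v m :: complex vec)"
      hence i: "i < m" by simp
      have "0 = (g' *\<^sub>v v) $ i" using v(3) i by simp
      also have "\<dots> = (\<Sum>k<m. g' $$ (i,k) * v $ k)" by (rule mult_vec_index_sum[OF g'c v(1) i])
      also have "\<dots> = (\<Sum>k<m. s i / ?t * (g $$ (i,k) * v $ k))"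
        using i unfolding g'_def by (auto intro!: sum.cong)
      also have "\<dots> = s i / ?t * (g *\<^sub>v v) $ i"
        using mult_vec_index_sum[OF gc v(1) i] by (simp add: sum_distrib_left)
      finally have "s i / ?t * (g *\<^sub>v v) $ i = 0" by simp
      thus "(g *\<^sub>v v) $ i = (0\<^sub>v m) $ i" using s i t by simp
    qed (use gc in simp)
    hence "det g = 0" using det_0_iff_vec_prod_zero[OF gc] v by blast
    with dg show False by simp
  qed
  show ?thesis unfolding QQ_def g'_def[symmetric] using g'c det' eig' last' by blast
qed

lemma xh_entries:
  fixes x :: "complex mat"
  assumes xc: "x \<in> carrier_mat n n" and d: "\<forall>i\<in>{1..n}. d i \<noteq> 0"
  shows "mat_diag n (\<lambda>j. d (j + 1)) * x * mat_inv (mat_diag n (\<lambda>j. d (j + 1)))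
     = mat n n (\<lambda>(i,j). d (i+1) * x $$ (i,j) / d (j+1))"
proof -
  let ?D = "mat_diag n (\<lambda>j. d (j + 1))"
  let ?E = "mat_diag n (\<lambda>j. 1 / d (j + 1))"
  have d': "\<And>i. i < n \<Longrightarrow> d (Suc i) \<noteq> 0" using d by auto
  have DE: "?D * ?E = 1\<^sub>m n" unfolding mat_diag_diag by (rule eq_matI) (auto simp: mat_diag_def d')
  have ED: "?E * ?D = 1\<^sub>m n" unfolding mat_diag_diag by (rule eq_matI) (auto simp: mat_diag_def d')
  have inv: "mat_inv ?D = ?E" by (rule mat_inv_unique[OF _ _ DE ED]) auto
  have "?D * x = mat n n (\<lambda>(i,j). d (i+1) * x $$ (i,j))" by (rule mat_diag_mult_left[OF xc])
  hence "?D * x * ?E = mat n n (\<lambda>(i,j). d (i+1) * x $$ (i,j)) * ?E" by simp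
  also have "\<dots> = mat n n (\<lambda>(i,j). d (i+1) * x $$ (i,j) * (1 / d (j+1)))"
    by (subst mat_diag_mult_right[of _ n n]) (auto intro!: eq_matI)
  also have "\<dots> = mat n n (\<lambda>(i,j). d (i+1) * x $$ (i,j) / d (j+1))" by simp
  finally show ?thesis unfolding inv .
qed

lemma block_row:
  fixes G Gi X :: "complex mat"
  assumes G: "G \<in> carrier_mat m m" and Gi: "Gi \<in> carrier_mat m m" and X: "X \<in> carrier_mat (m+1) (m+1)"
    and j: "j < m"
  shows "(four_block_mat Gi (0\<^sub>m m 1) (0\<^sub>m 1 m) (1\<^sub>m 1) * X * four_block_mat G (0\<^sub>m m 1) (0\<^sub>m 1 m) (1\<^sub>m 1)) $$ (m,j)
     = (\<Sum>l<m. X $$ (m,l) * G $$ (l,j))"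
proof -
  let ?F1 = "four_block_mat Gi (0\<^sub>m m 1) (0\<^sub>m 1 m) (1\<^sub>m 1)"
  let ?F2 = "four_block_mat G (0\<^sub>m m 1) (0\<^sub>m 1 m) (1\<^sub>m 1)"
  have F1: "?F1 \<in> carrier_mat (m+1) (m+1)" using Gi by auto
  have F2: "?F2 \<in> carrier_mat (m+1) (m+1)" using G by auto
  have F1X: "?F1 * X \<in> carrier_mat (m+1) (m+1)" using F1 X by auto
  have r: "(?F1 * X) $$ (m,l) = X $$ (m,l)" if l: "l < m + 1" for l
  proof -
    have "(?F1 * X) $$ (m,l) = (\<Sum>k<m+1. ?F1 $$ (m,k) * X $$ (k,l))"
      by (rule mult_mat_index_sum[OF F1 X]) (use l in auto)
    also have "\<dots> = (\<Sum>k<m+1. (if k = m then X $$ (m,l) else 0))"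
      using Gi by (intro sum.cong) auto
    also have "\<dots> = X $$ (m,l)" by simp
    finally show ?thesis .
  qed
  have "(?F1 * X * ?F2) $$ (m,j) = (\<Sum>l<m+1. (?F1 * X) $$ (m,l) * ?F2 $$ (l,j))"
    by (rule mult_mat_index_sum[OF F1X F2]) (use j in auto)
  also have "\<dots> = (\<Sum>l<m+1. X $$ (m,l) * (if l < m then G $$ (l,j) else 0))"
    using r G j by (intro sum.cong) auto
  also have "\<dots> = (\<Sum>l<m. X $$ (m,l) * G $$ (l,j))" by simp
  finally show ?thesis .
qed



theorem mainTheorem4:
  fixes n :: nat and x :: "complex mat" and mu :: "nat \<Rightarrow> nat \<Rightarrow> complex"
    and d :: "nat \<Rightarrow> complex"
  assumes "n \<ge> 2"
    and "generic n x"
    and "valid_orderings n x mu"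
    and "\<forall>i\<in>{1..n}. d i \<noteq> 0"
  shows "let D = mat_diag n (\<lambda>j. d (j + 1)); xh = D * x * mat_inv D in
         \<forall>m\<in>{1..n-1}. dual_coord xh mu m = (d (m + 1) / d m) \<cdot>\<^sub>v dual_coord x mu m"
proof -
  note gen = assms(2) and vo = assms(3) and dnz = assms(4)
  have xc: "x \<in> carrier_mat n n" using gen unfolding generic_def by auto
  define xh where "xh = mat_diag n (\<lambda>j. d (j + 1)) * x * mat_inv (mat_diag n (\<lambda>j. d (j + 1)))"
  have xh: "xh = mat n n (\<lambda>(i,j). d (i+1) * x $$ (i,j) / d (j+1))"
    unfolding xh_def by (rule xh_entries[OF xc dnz])
  have xhi: "\<And>i j. i < n \<Longrightarrow> j < n \<Longrightarrow> xh $$ (i,j) = d (i+1) * x $$ (i,j) / d (j+1)"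
    unfolding xh by simp
  have "\<forall>m\<in>{1..n-1}. dual_coord xh mu m = (d (m + 1) / d m) \<cdot>\<^sub>v dual_coord x mu m"
  proof
    fix m assume mm: "m \<in> {1..n-1}"
    hence m1: "1 \<le> m" and mn: "m + 1 \<le> n" by auto
    have ds: "\<forall>i<m. d (i+1) \<noteq> 0" using dnz mn by auto
    have dm: "d m \<noteq> 0" using dnz m1 mn by auto
    have dm1: "d (m - 1 + 1) = d m" using m1 by simp
    let ?X = "\<lambda>i l. x $$ (i,l)" and ?Xh = "\<lambda>i l. xh $$ (i,l)"
    have ex1: "\<exists>!g. QQ ?X mu m g" using EU[OF gen vo m1] mn by simp
    then obtain g0 where Q0: "QQ ?X mu m g0" by blast
    have g0eq: "g_mat x mu m = g0" unfolding g_mat_QQ using ex1 Q0 by (metis the1_equality)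
    define gh where "gh = mat m m (\<lambda>(i,j). d (i+1) * g0 $$ (i,j) / d m)"
    have Qh: "QQ ?Xh mu m gh"
      using transfer[OF Q0 _ ds m1, of ?Xh] xhi mn unfolding gh_def dm1 by simp
    have uniq: "h = gh" if Qhh: "QQ ?Xh mu m h" for h
    proof -
      have hc: "h \<in> carrier_mat m m" using Qhh unfolding QQ_def by auto
      have XX: "\<forall>i<m. \<forall>l<m. ?X i l = (1 / d (i+1)) * ?Xh i l / (1 / d (l+1))"
        using xhi mn ds by auto
      have "QQ ?X mu m (mat m m (\<lambda>(i,j). (1 / d (i+1)) * h $$ (i,j) / (1 / d (m - 1 + 1))))"
        by (rule transfer[OF Qhh XX _ m1]) (use ds in auto)
      hence eqn: "mat m m (\<lambda>(i,j). (1 / d (i+1)) * h $$ (i,j) / (1 / d (m - 1 + 1))) = g0"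
        using ex1 Q0 by blast
      have E: "(1 / d (i+1)) * h $$ (i,j) / (1 / d m) = g0 $$ (i,j)" if ij: "i < m" "j < m" for i j
      proof -
        have "mat m m (\<lambda>(i,j). (1 / d (i+1)) * h $$ (i,j) / (1 / d (m - 1 + 1))) $$ (i,j) = g0 $$ (i,j)"
          using eqn by simp
        thus ?thesis using ij dm1 by simp
      qed
      show "h = gh"
      proof (rule eq_matI)
        fix i j assume "i < dim_row gh" "j < dim_col gh"
        hence ij: "i < m" "j < m" unfolding gh_def by auto
        show "h $$ (i,j) = gh $$ (i,j)" using E[OF ij] ij ds dm unfolding gh_def
          by (auto simp: field_simps)
      qed (use hc in \<open>auto simp: gh_def\<close>)
    qed
    have ghq: "g_mat xh mu m = gh" unfolding g_mat_QQ using Qh uniq by (rule the_equality)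
    have ghc: "gh \<in> carrier_mat m m" and dgh: "det gh \<noteq> 0" using Qh unfolding QQ_def by auto
    have g0c: "g0 \<in> carrier_mat m m" and dg0: "det g0 \<noteq> 0" using Q0 unfolding QQ_def by auto
    show "dual_coord xh mu m = (d (m + 1) / d m) \<cdot>\<^sub>v dual_coord x mu m"
    proof (rule eq_vecI)
      fix j assume "j < dim_vec ((d (m + 1) / d m) \<cdot>\<^sub>v dual_coord x mu m)"
      hence j: "j < m" unfolding dual_coord_def by simp
      have "dual_coord xh mu m $ j = conj_block xh mu m $$ (m,j)" unfolding dual_coord_def using j by simp
      also have "\<dots> = (\<Sum>l<m. lead_sub xh (m+1) $$ (m,l) * gh $$ (l,j))"
        unfolding conj_block_def ghq
        by (rule block_row[OF ghc conjunct1[OF mat_inv_props[OF ghc dgh]] lead_sub_carrier j])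
      also have "\<dots> = (\<Sum>l<m. d (m + 1) / d m * (x $$ (m,l) * g0 $$ (l,j)))"
      proof (rule sum.cong)
        fix l assume "l \<in> {..<m}"
        hence l: "l < m" by simp
        have "lead_sub xh (m+1) $$ (m,l) = xh $$ (m,l)" using l by simp
        thus "lead_sub xh (m+1) $$ (m,l) * gh $$ (l,j) = d (m + 1) / d m * (x $$ (m,l) * g0 $$ (l,j))"
          using xhi[of m l] l mn j ds dm unfolding gh_def by (simp add: field_simps)
      qed simp
      also have "\<dots> = d (m + 1) / d m * (\<Sum>l<m. x $$ (m,l) * g0 $$ (l,j))"
        by (rule sum_distrib_left[symmetric])
      also have "(\<Sum>l<m. x $$ (m,l) * g0 $$ (l,j)) = dual_coord x mu m $ j"
      proof -
        have "dual_coord x mu m $ j = conj_block x mu m $$ (m,j)" unfolding dual_coord_def using j by simp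
        also have "\<dots> = (\<Sum>l<m. lead_sub x (m+1) $$ (m,l) * g0 $$ (l,j))"
          unfolding conj_block_def g0eq
          by (rule block_row[OF g0c conjunct1[OF mat_inv_props[OF g0c dg0]] lead_sub_carrier j])
        also have "\<dots> = (\<Sum>l<m. x $$ (m,l) * g0 $$ (l,j))" by (intro sum.cong) auto
        finally show ?thesis by simp
      qed
      finally show "dual_coord xh mu m $ j = ((d (m + 1) / d m) \<cdot>\<^sub>v dual_coord x mu m) $ j"
        using j unfolding dual_coord_def by simp
    qed (simp add: dual_coord_def)
  qed
  thus ?thesis unfolding Let_def xh_def .
qed

end
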